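(* Let $n,m,\ell\in\mathbb{N}$ with $\ell\geq\lceil\log_2 8n\rceil$, and let $w>1$ be a number representable with $n$ bits of which the first $m$ are its integer part. Let $b=\max\{5\ell,25\}$, let $p\in\mathbb{N}$ with $2^p>w\geq 2^{p-1}$, and let $r$ be a number with $|r-\ln 2|\leq 2^{-b}$. Then the value $\hat{z}=z_p+(p-1)r$ returned by Algorithm LN$(w,n,m,\ell)$ (described in the context, using this $r$) satisfies $$|\hat{z}-\ln w|\leq\left(\frac{3}{4}\right)^{5\ell/2}\left(m+\frac{32}{9}+2\left(\frac{32}{9}+\frac{n}{\ln 2}\right)^3\right).$$
   Context: Fixed precision representation: a number $w\ge 0$ "given by $n$ bits of which the first $m$ correspond to its integer part" means $w=\sum_{j=m-n}^{m-1} w^{(j)}2^j$ with $w^{(j)}\in\{0,1\}$. For $x\geq 0$, "truncating $x$ to $b$ bits after the binary point" means replacing $x$ by $\lfloor 2^b x\rfloor/2^b$. All arithmetic inside a step is performed exactly; only the stated truncations introduce error. Algorithm SQRT$(w,n,m,b)$ (input $w\geq 1$): if $w=1$, return $1$. Otherwise: let $p'\in\mathbb{N}$ with $2^{p'}>w\geq 2^{p'-1}$ and set $\hat{x}_0=2^{-p'}$; let $s=\lceil\log_2 b\rceil$; for $i=1,\dots,s$ compute exactly $x_i=-w\hat{x}_{i-1}^2+2\hat{x}_{i-1}$ and let $\hat{x}_i$ be $x_i$ truncated to $b$ bits after the binary point. Then let $q\in\mathbb{N}$ with $2^{1-q}>\hat{x}_s\geq 2^{-q}$ and set $\hat{y}_0=2^{\lfloor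 (q-1)/2\rfloor}$; for $j=1,\dots,s$ compute exactly $y_j=\frac12(3\hat{y}_{j-1}-\hat{x}_s\hat{y}_{j-1}^3)$ and let $\hat{y}_j$ be $y_j$ truncated to $b$ bits. Return $\hat{y}_s$. Algorithm PowerOf2Roots$(w,k,n,m,b)$: set $\hat{z}_1=$ SQRT$(w,n,m,b)$; for $i=2,\dots,k$ set $\hat{z}_i=$ SQRT$(\hat{z}_{i-1},m+b,m,b)$. Return $\hat{z}_1,\dots,\hat{z}_k$. Algorithm LN$(w,n,m,\ell)$ (input $w\geq 1$): set $b=\max\{5\ell,25\}$ and let $r$ be a $b$-bit approximation of $\ln 2$ with $|r-\ln 2|\le 2^{-b}$. If $w=1$ return $0$. Let $p\in\mathbb{N}$ with $2^p>w\geq 2^{p-1}$ and set $w_p=2^{1-p}w\in[1,2)$ (computed exactly, represented with $n$ bits of which $1$ is integer). If $w_p=1$, set $z_p=0$. Otherwise let $\hat{t}_p$ be the last output $\hat{z}_\ell$ of PowerOf2Roots$(w_p,\ell,n,1,b)$, let $\hat{y}_p$ be $(\hat{t}_p-1)-\frac12(\hat{t}_p-1)^2$ truncated to $b$ bits after the binary point, and set $z_p=2^\ell\hat{y}_p$. Return $z_p+(p-1)r$. *)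

theory Defs
  imports Complex_Main
begin

definition fixed_repr :: "nat \<Rightarrow> nat \<Rightarrow> real \<Rightarrow> bool" where
  "fixed_repr n m w \<longleftrightarrow>
     (\<exists>d :: int \<Rightarrow> real. (\<forall>j. d j \<in> {0, 1}) \<and>
        w = (\<Sum>j\<in>{int m - int n .. int m - 1}. d j * 2 powr (real_of_int j)))"

definition trunc_bits :: "nat \<Rightarrow> real \<Rightarrow> real" where
  "trunc_bits b x = real_of_int \<lfloor>2 ^ b * x\<rfloor> / 2 ^ b"

text \<open>Algorithm SQRT (the parameters n, m only describe the input format and do not
  influence the computation).\<close>
definition SQRT :: "nat \<Rightarrow> real \<Rightarrow> real" where
  "SQRT b w =
    (if w = 1 then 1 else
      (let p' = (THE p'::nat. 2 ^ p' > w \<and> w \<ge> 2 ^ (p' - 1));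
           s = nat \<lceil>log 2 (real b)\<rceil>;
           xs = ((\<lambda>x. trunc_bits b (- w * x\<^sup>2 + 2 * x)) ^^ s) (2 powr (- real p'));
           q = (THE q::nat. 2 powr (1 - real q) > xs \<and> xs \<ge> 2 powr (- real q));
           y0 = 2 powr (real_of_int \<lfloor>(real q - 1) / 2\<rfloor>)
       in ((\<lambda>y. trunc_bits b ((3 * y - xs * y ^ 3) / 2)) ^^ s) y0))"

definition PowerOf2Roots :: "nat \<Rightarrow> real \<Rightarrow> nat \<Rightarrow> real" where
  "PowerOf2Roots b w i = (SQRT b ^^ i) w"

text \<open>Algorithm LN, with the b-bit approximation r of ln 2 supplied as a parameter.\<close>
definition LN :: "real \<Rightarrow> nat \<Rightarrow> real \<Rightarrow> real" where
  "LN w l r =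
    (let b = max (5 * l) 25 in
     if w = 1 then 0 else
      (let p = (THE p::nat. 2 ^ p > w \<and> w \<ge> 2 ^ (p - 1));
           wp = 2 powr (1 - real p) * w;
           zp = (if wp = 1 then 0 else
                  (let t = PowerOf2Roots b wp l;
                       y = trunc_bits b ((t - 1) - (t - 1)\<^sup>2 / 2)
                   in 2 ^ l * y))
       in zp + (real p - 1) * r))"

end

theory Submission
  imports Defs
begin


lemma trunc_le: "trunc_bits b x \<le> x"
proof -
  have "real_of_int \<lfloor>2 ^ b * x\<rfloor> \<le> 2^b * x" by simp
  then show ?thesis unfolding trunc_bits_def by (simp add: divide_le_eq mult.commute)
qed

lemma trunc_gt: "x - 1 / 2 ^ b < trunc_bits b x"
proof -
  have "2^b * x < real_of_int \<lfloor>2 ^ b * x\<rfloor> + 1" by linarith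
  then have "2^b * x - 1 < real_of_int \<lfloor>2 ^ b * x\<rfloor>" by simp
  then have "(2^b * x - 1) / 2^b < real_of_int \<lfloor>2 ^ b * x\<rfloor> / 2^b"
    by (simp add: divide_strict_right_mono)
  then show ?thesis unfolding trunc_bits_def by (simp add: diff_divide_distrib)
qed

lemma trunc_mono: "x \<le> y \<Longrightarrow> trunc_bits b x \<le> trunc_bits b y"
  unfolding trunc_bits_def by (simp add: divide_right_mono floor_mono)

lemma trunc_idem: "trunc_bits b (trunc_bits b x) = trunc_bits b x"
  unfolding trunc_bits_def by simp

lemma trunc_half: "b \<ge> 1 \<Longrightarrow> trunc_bits b (1/2) = 1/2"
proof -
  assume "b \<ge> 1"
  then have "(2::real)^b / 2 = of_int (2^(b-1))"
    by (metis One_nat_def Suc_diff_le diff_Suc_1 nonzero_mult_div_cancel_left of_int_numeral of_int_power power_Suc zero_neq_numeral)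
  then show ?thesis unfolding trunc_bits_def by simp
qed

lemma trunc_one: "trunc_bits b 1 = 1"
proof -
  have "(2::real)^b = of_int (2^b)" by simp
  then show ?thesis unfolding trunc_bits_def by (simp del: of_int_power)
qed

lemma ln_one_minus: fixes e :: real assumes "0 \<le> e" "e \<le> 1/2" shows "- ln (1 - e) \<le> 2 * e"
proof -
  have "ln (1 / (1 - e)) \<le> 1/(1-e) - 1" using assms by (intro ln_le_minus_one) auto
  moreover have "ln (1 / (1 - e)) = - ln (1 - e)" using assms by (simp add: ln_div)
  moreover have "1/(1-e) - 1 = e / (1 - e)" using assms by (simp add: field_simps)
  moreover have "e / (1 - e) \<le> 2 * e"
  proof -
    have "e * (2 * e) \<le> e * 1" using assms by (intro mult_left_mono) auto
    then show ?thesis using assms by (simp add: divide_le_eq algebra_simps)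
  qed
  ultimately show ?thesis by linarith
qed

lemma ln_series_lower: fixes u :: real assumes "0 \<le> u" shows "u - u^2/2 \<le> ln (1 + u)"
proof -
  have "(\<lambda>u. ln (1 + u) - u + u^2/2) 0 \<le> (\<lambda>u. ln (1 + u) - u + u^2/2) u"
  proof (rule DERIV_nonneg_imp_nondecreasing[OF assms])
    fix x :: real assume x: "0 \<le> x" "x \<le> u"
    show "\<exists>y. ((\<lambda>u. ln (1 + u) - u + u^2/2) has_real_derivative y) (at x) \<and> 0 \<le> y"
    proof (intro exI conjI)
      show "((\<lambda>u. ln (1 + u) - u + u^2/2) has_real_derivative (1/(1+x) - 1 + x)) (at x)"
        using x by (auto intro!: derivative_eq_intros)
      have "1/(1+x) - 1 + x = x^2/(1+x)" using x by (simp add: field_simps power2_eq_square)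
      then show "0 \<le> 1/(1+x) - 1 + x" using x by simp
    qed
  qed
  then show ?thesis by simp
qed

lemma ln_series_upper: fixes u :: real assumes "0 \<le> u" shows "ln (1 + u) \<le> u - u^2/2 + u^3/3"
proof -
  have "(\<lambda>u. u - u^2/2 + u^3/3 - ln (1 + u)) 0 \<le> (\<lambda>u. u - u^2/2 + u^3/3 - ln (1 + u)) u"
  proof (rule DERIV_nonneg_imp_nondecreasing[OF assms])
    fix x :: real assume x: "0 \<le> x" "x \<le> u"
    show "\<exists>y. ((\<lambda>u. u - u^2/2 + u^3/3 - ln (1 + u)) has_real_derivative y) (at x) \<and> 0 \<le> y"
    proof (intro exI conjI)
      show "((\<lambda>u. u - u^2/2 + u^3/3 - ln (1 + u)) has_real_derivative (1 - x + x^2 - 1/(1+x))) (at x)"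
        using x by (auto intro!: derivative_eq_intros)
      have "1 - x + x^2 - 1/(1+x) = x^3/(1+x)" using x by (simp add: field_simps power2_eq_square power3_eq_cube)
      then show "0 \<le> 1 - x + x^2 - 1/(1+x)" using x by simp
    qed
  qed
  then show ?thesis by simp
qed



lemma seqA:
  fixes a :: "nat \<Rightarrow> real" and d :: real
  assumes a0: "a 0 \<le> 1/2" and rec: "\<And>i. a (Suc i) \<le> (a i)^2 + 2*d"
    and pos: "\<And>i. 0 \<le> a i" and d: "0 \<le> d" "d \<le> 1/100"
  shows "i \<ge> 1 \<Longrightarrow> a i \<le> (1/2)^(2^i) + 5*d"
proof (induction i)
  case 0 then show ?case by simp
next
  case (Suc i)
  show ?case
  proof (cases "i = 0")
    case True
    have "(a 0)^2 \<le> (1/2)^2" using a0 pos[of 0] by (intro power_mono) auto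
    then show ?thesis using rec[of 0] True d by simp
  next
    case False
    define h :: real where "h = (1/2)^(2^i)"
    have IH: "a i \<le> h + 5*d" using Suc False by (simp add: h_def)
    have two: "2 \<le> (2::nat)^i" using False by (cases i) auto
    have pd: "(1/2::real)^(2^i) \<le> (1/2)^2"
      by (rule power_decreasing[OF two]) auto
    have q: "(1/2::real)^2 = 1/4" by (simp add: power2_eq_square)
    have h: "0 \<le> h" "h \<le> 1/4" using pd q unfolding h_def by (simp, linarith)
    have "(a i)^2 \<le> (h + 5*d)^2" using IH pos[of i] by (intro power_mono) auto
    also have "\<dots> = h^2 + 10*h*d + 25*d*d" by (simp add: power2_eq_square algebra_simps)
    finally have "a (Suc i) \<le> h^2 + 10*h*d + 25*d*d + 2*d" using rec[of i] by linarith
    moreover have "10*h*d \<le> 10*(1/4)*d" using h d by (intro mult_right_mono) auto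
    moreover have "25*d*d \<le> 25*(1/100)*d" using d by (intro mult_right_mono mult_left_mono) auto
    moreover have "h^2 = (1/2)^(2^Suc i)" by (simp add: h_def power_mult[symmetric] mult.commute)
    ultimately show ?thesis using d by linarith
  qed
qed

lemma seqF:
  fixes f :: "nat \<Rightarrow> real" and d :: real
  assumes f0: "f 0 \<le> 9/20" and rec: "\<And>i. f (Suc i) \<le> (f i)^2 + 3/2*d"
    and pos: "\<And>i. 0 \<le> f i" and d: "0 \<le> d" "d \<le> 1/800"
  shows "f i \<le> (9/20)^(2^i) + 20*d"
proof (induction i)
  case 0 then show ?case using f0 d by simp
next
  case (Suc i)
  define h :: real where "h = (9/20)^(2^i)"
  have IH: "f i \<le> h + 20*d" using Suc by (simp add: h_def)
  have pd: "(9/20::real)^(2^i) \<le> (9/20)^1"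
    by (rule power_decreasing) auto
  have h: "0 \<le> h" "h \<le> 9/20" using pd unfolding h_def by (simp, simp)
  have "(f i)^2 \<le> (h + 20*d)^2" using IH pos[of i] by (intro power_mono) auto
  also have "\<dots> = h^2 + 40*h*d + 400*d*d" by (simp add: power2_eq_square algebra_simps)
  finally have "f (Suc i) \<le> h^2 + 40*h*d + 400*d*d + 3/2*d" using rec[of i] by linarith
  moreover have "40*h*d \<le> 40*(9/20)*d" using h d by (intro mult_right_mono) auto
  moreover have "400*d*d \<le> 400*(1/800)*d" using d by (intro mult_right_mono mult_left_mono) auto
  moreover have "h^2 = (9/20)^(2^Suc i)" by (simp add: h_def power_mult[symmetric] mult.commute)
  ultimately show ?case using d by linarith
qed

lemma s_bound: assumes "1 \<le> b" shows "b \<le> 2 ^ (nat \<lceil>log 2 (real b)\<rceil>)"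
proof -
  define k where "k = nat \<lceil>log 2 (real b)\<rceil>"
  have "log 2 (real b) \<ge> 0" using assms by simp
  then have "real k \<ge> log 2 (real b)" unfolding k_def by linarith
  then have "2 powr real k \<ge> 2 powr log 2 (real b)"
    by (intro powr_mono) auto
  moreover have "2 powr log 2 (real b) = real b" using assms by simp
  moreover have "2 powr real k = real (2 ^ k)" by (simp add: powr_realpow)
  ultimately have "real b \<le> real (2 ^ k)" by linarith
  then show ?thesis unfolding k_def of_nat_le_iff .
qed



lemma rec_helper: fixes A E d :: real assumes "A \<le> 3/2 * E^2 + d"
  shows "3/2*A \<le> (3/2*E)^2 + 3/2*d"
proof -
  have "(3/2*E)^2 = 9/4*E^2" by (simp add: power2_eq_square)
  then show ?thesis using assms by linarith
qed

lemma lin_helper: fixes E A B d :: real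
  shows "3/2*E \<le> A + 20*d \<Longrightarrow> A \<le> B \<Longrightarrow> B \<le> d \<Longrightarrow> E \<le> 14*d"
  by linarith

lemma SQRT_main:
  fixes w :: real
  assumes w1: "1 < w" and w2: "w < 2" and b: "25 \<le> b"
  shows "1 \<le> SQRT b w \<and> SQRT b w < 2 \<and> \<bar>ln (SQRT b w) - ln w / 2\<bar> \<le> 30 / 2^b"
proof -
  define d :: real where "d = 1 / 2^b"
  have "(2::real)^25 \<le> 2^b" using b by (intro power_increasing) auto
  then have d: "0 < d" "d \<le> 1/800" unfolding d_def by (auto simp: field_simps)
  have p': "(THE p'::nat. 2 ^ p' > w \<and> w \<ge> 2 ^ (p' - 1)) = 1"
  proof (rule the_equality)
    show "2 ^ 1 > w \<and> w \<ge> 2 ^ (1 - 1)" using w1 w2 by simp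
  next
    fix p' :: nat assume h: "2 ^ p' > w \<and> w \<ge> 2 ^ (p' - 1)"
    show "p' = 1"
    proof (rule ccontr)
      assume "p' \<noteq> 1"
      then consider "p' = 0" | "p' \<ge> 2" by linarith
      then show False
      proof cases
        case 1 then show False using h w1 by simp
      next
        case 2
        then have "(2::real)^1 \<le> 2^(p'-1)" by (intro power_increasing) auto
        then show False using h w2 by simp
      qed
    qed
  qed
  define s where "s = nat \<lceil>log 2 (real b)\<rceil>"
  have bs: "b \<le> 2^s" unfolding s_def using b by (intro s_bound) auto
  have s1: "1 \<le> s" proof (rule ccontr)
    assume "\<not> 1 \<le> s" then have "s = 0" by simp
    then show False using bs b by simp
  qed
  have dpow: "(1/2::real)^(2^s) \<le> d"
  proof -
    have "(1/2::real)^(2^s) \<le> (1/2)^b" by (rule power_decreasing[OF bs]) auto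
    then show ?thesis unfolding d_def by (simp add: power_one_over)
  qed
  define F where "F = (\<lambda>x. trunc_bits b (- w * x\<^sup>2 + 2 * x))"
  define X where "X i = (F ^^ i) (1/2)" for i
  have XS: "X (Suc i) = F (X i)" for i unfolding X_def by simp
  have Xinv: "1/2 \<le> X i \<and> X i \<le> 1/w \<and> trunc_bits b (X i) = X i" for i
  proof (induction i)
    case 0
    have "1/2 \<le> 1/w" using w1 w2 by (simp add: field_simps)
    then show ?case using b by (simp add: X_def trunc_half)
  next
    case (Suc i)
    define x where "x = X i"
    have x: "1/2 \<le> x" "x \<le> 1/w" "trunc_bits b x = x" using Suc by (auto simp: x_def)
    have wx: "w * x \<le> 1" using x(2) w1 by (simp add: field_simps)
    define f where "f = - w * x\<^sup>2 + 2 * x"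
    have "1/w - f = (1 - w*x)^2 / w" using w1 by (simp add: f_def field_simps power2_eq_square)
    moreover have "0 \<le> (1 - w*x)^2 / w" using w1 by simp
    ultimately have f1: "f \<le> 1/w" by linarith
    have "f - x = x * (1 - w * x)" by (simp add: f_def algebra_simps power2_eq_square)
    moreover have "0 \<le> x * (1 - w * x)" using x(1) wx by (intro mult_nonneg_nonneg) auto
    ultimately have f2: "x \<le> f" by linarith
    have XF: "X (Suc i) = trunc_bits b f" by (simp add: XS F_def f_def x_def)
    have "X (Suc i) \<le> f" using XF trunc_le by simp
    moreover have "x \<le> X (Suc i)" using XF trunc_mono[OF f2, of b] x(3) by simp
    ultimately show ?case using x f1 XF trunc_idem by auto
  qed
  have Xerr: "1 - w * X (Suc i) \<le> (1 - w * X i)^2 + 2*d" for i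
  proof -
    define x where "x = X i"
    define f where "f = - w * x\<^sup>2 + 2 * x"
    have XF: "X (Suc i) = trunc_bits b f" by (simp add: XS F_def f_def x_def)
    have "f - d < X (Suc i)" using XF trunc_gt[of f b] by (simp add: d_def)
    then have "w * (f - d) \<le> w * X (Suc i)" using w1 by simp
    moreover have "1 - w * f = (1 - w * x)^2" by (simp add: f_def algebra_simps power2_eq_square)
    moreover have "w * d \<le> 2 * d" using w2 d by simp
    ultimately show ?thesis unfolding x_def by (simp add: algebra_simps)
  qed
  have apos: "0 \<le> 1 - w * X i" for i using Xinv[of i] w1 by (simp add: field_simps)
  have a_s: "1 - w * X s \<le> 6 * d"
  proof -
    have "1 - w * X s \<le> (1/2)^(2^s) + 5*d"
      using seqA[of "\<lambda>i. 1 - w * X i" d, OF _ Xerr apos] s1 d w1 by (simp add: X_def)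
    then show ?thesis using dpow by simp
  qed
  define xs where "xs = X s"
  have xs: "1/2 \<le> xs" "xs \<le> 1/w" "trunc_bits b xs = xs" using Xinv[of s] by (auto simp: xs_def)
  have "1/w < 1" using w1 by simp
  then have xs1: "xs < 1" using xs(2) by linarith
  have q: "(THE q::nat. 2 powr (1 - real q) > xs \<and> xs \<ge> 2 powr (- real q)) = 1"
  proof (rule the_equality)
    show "2 powr (1 - real 1) > xs \<and> xs \<ge> 2 powr (- real 1)" using xs xs1 by (simp add: powr_minus_divide)
  next
    fix q :: nat assume h: "2 powr (1 - real q) > xs \<and> xs \<ge> 2 powr (- real q)"
    show "q = 1"
    proof (rule ccontr)
      assume "q \<noteq> 1"
      then consider "q = 0" | "q \<ge> 2" by linarith
      then show False
      proof cases
        case 1 then show False using h xs1 by simp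
      next
        case 2
        then have "2 powr (1 - real q) \<le> 2 powr (-1)" by (intro powr_mono) auto
        then show False using h xs by (simp add: powr_minus_divide)
      qed
    qed
  qed
  have hx: "((\<lambda>x. trunc_bits b (- w * x\<^sup>2 + 2 * x)) ^^ nat \<lceil>log 2 (real b)\<rceil>) (2 powr (- real (1::nat))) = xs"
    by (simp add: xs_def X_def F_def s_def powr_minus_divide)
  have hy: "(2::real) powr real_of_int \<lfloor>(real (1::nat) - 1) / 2\<rfloor> = 1" by simp
  define G where "G = (\<lambda>y. trunc_bits b ((3 * y - xs * y ^ 3) / 2))"
  define Y where "Y i = (G ^^ i) 1" for i
  have YS: "Y (Suc i) = G (Y i)" for i unfolding Y_def by simp
  have SQ: "SQRT b w = Y s"
    unfolding SQRT_def Let_def p' hx q hy using w1 by (simp add: Y_def G_def s_def)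
  define c where "c = sqrt xs"
  have c2: "c^2 = xs" using xs by (simp add: c_def)
  have c1: "c < 1" using xs1 xs by (simp add: c_def)
  have "sqrt ((7/10)^2) \<le> c" unfolding c_def using xs by (intro real_sqrt_le_mono) (simp add: power2_eq_square)
  then have c07: "7/10 \<le> c" by simp
  have Yinv: "1 \<le> Y i \<and> Y i * c \<le> 1 \<and> trunc_bits b (Y i) = Y i" for i
  proof (induction i)
    case 0
    show ?case using c1 by (simp add: Y_def trunc_one)
  next
    case (Suc i)
    define y where "y = Y i"
    have y: "1 \<le> y" "y * c \<le> 1" "trunc_bits b y = y" using Suc by (auto simp: y_def)
    define v where "v = y * c"
    have v: "0 \<le> v" "v \<le> 1" using y c07 by (auto simp: v_def)
    define g where "g = (3 * y - xs * y ^ 3) / 2"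
    have "g - y = y * (1 - v^2) / 2" unfolding g_def v_def c2[symmetric] by (simp add: field_simps power2_eq_square power3_eq_cube)
    moreover have "0 \<le> y * (1 - v^2) / 2" using y v by (simp add: power_le_one)
    ultimately have g1: "y \<le> g" by linarith
    have "1 - g * c = (1 - v)^2 * (v + 2) / 2"
      unfolding g_def v_def c2[symmetric] by (simp add: field_simps power2_eq_square power3_eq_cube)
    moreover have "0 \<le> (1 - v)^2 * (v + 2) / 2" using v by simp
    ultimately have g2: "g * c \<le> 1" by linarith
    have YG: "Y (Suc i) = trunc_bits b g" by (simp add: YS G_def g_def y_def)
    have "Y (Suc i) \<le> g" using YG trunc_le by simp
    then have "Y (Suc i) * c \<le> g * c" using c07 by (intro mult_right_mono) auto
    moreover have "y \<le> Y (Suc i)" using YG trunc_mono[OF g1, of b] y(3) by simp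
    ultimately show ?case using y g2 YG trunc_idem by auto
  qed
  have Yerr: "1 - c * Y (Suc i) \<le> 3/2 * (1 - c * Y i)^2 + d" for i
  proof -
    define y where "y = Y i"
    define e where "e = 1 - c * y"
    have e: "0 \<le> e" "e \<le> 1" using Yinv[of i] c07 by (auto simp: e_def y_def mult.commute)
    define g where "g = (3 * y - xs * y ^ 3) / 2"
    have YG: "Y (Suc i) = trunc_bits b g" by (simp add: YS G_def g_def y_def)
    have "g - d < Y (Suc i)" using YG trunc_gt[of g b] by (simp add: d_def)
    then have "c * (g - d) \<le> c * Y (Suc i)" using c07 by simp
    moreover have "c * d \<le> d" using c1 d by (simp add: mult_left_le_one_le)
    moreover have "1 - c * g = 3/2 * e^2 - e^3 / 2"
      unfolding g_def e_def c2[symmetric] by (simp add: field_simps power2_eq_square power3_eq_cube)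
    moreover have "0 \<le> e^3" using e by simp
    ultimately have "1 - c * Y (Suc i) \<le> 3/2 * e^2 + d" by (simp only: right_diff_distrib)
    then show ?thesis unfolding e_def y_def .
  qed
  have epos: "0 \<le> 3/2 * (1 - c * Y i)" for i using Yinv[of i] by (simp add: mult.commute)
  have e_s: "1 - c * Y s \<le> 14 * d"
  proof -
    have rec: "3/2 * (1 - c * Y (Suc i)) \<le> (3/2 * (1 - c * Y i))^2 + 3/2 * d" for i
      by (rule rec_helper[OF Yerr[of i]])
    have "3/2 * (1 - c * Y 0) \<le> 9/20" using c07 by (simp add: Y_def)
    then have "3/2 * (1 - c * Y s) \<le> (9/20)^(2^s) + 20*d"
      using seqF[of "\<lambda>i. 3/2 * (1 - c * Y i)" d, OF _ rec epos] d by simp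
    moreover have "(9/20::real)^(2^s) \<le> (1/2)^(2^s)" by (intro power_mono) auto
    ultimately show ?thesis using dpow by (rule lin_helper)
  qed
  define y where "y = Y s"
  have y: "1 \<le> y" "y * c \<le> 1" "1 - 14 * d \<le> c * y" using Yinv[of s] e_s by (auto simp: y_def)
  have cpos: "0 < c" using c07 by simp
  have lnc: "ln c = ln xs / 2" unfolding c_def using xs by (simp add: ln_sqrt)
  have lny: "ln y = ln (c * y) - ln c" using cpos y by (simp add: ln_mult)
  have "ln xs \<le> ln (1/w)" using xs w1 by (intro ln_mono) auto
  moreover have "ln (1/w) = - ln w" using w1 by (simp add: ln_div)
  ultimately have lxs1: "ln xs \<le> - ln w" by simp
  have "(1 - 6*d) / w \<le> xs" using a_s w1 by (simp add: field_simps xs_def)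
  then have "ln ((1 - 6*d) / w) \<le> ln xs" using d w1 by (intro ln_mono) auto
  then have lxs2: "ln (1 - 6*d) - ln w \<le> ln xs" using d w1 by (simp add: ln_div)
  have l6: "- ln (1 - 6*d) \<le> 2 * (6*d)" using d by (intro ln_one_minus) auto
  have "0 < c * y" using cpos y by simp
  then have "ln (c * y) \<le> 0" using y by (simp add: mult.commute)
  moreover have "ln (1 - 14*d) \<le> ln (c * y)" using y d by (intro ln_mono) auto
  moreover have "- ln (1 - 14*d) \<le> 2 * (14*d)" using d by (intro ln_one_minus) auto
  ultimately have "\<bar>ln y - ln w / 2\<bar> \<le> 30 * d" using lny lnc lxs1 lxs2 l6 d by (simp add: abs_le_iff)
  moreover have "y < 2"
  proof -
    have "y * (7/10) \<le> y * c" using y c07 by (intro mult_left_mono) auto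
    then show ?thesis using y by linarith
  qed
  ultimately show ?thesis using SQ y by (simp add: y_def d_def)
qed



lemma SQRT_ok:
  fixes w :: real
  assumes "1 \<le> w" "w < 2" "25 \<le> b"
  shows "1 \<le> SQRT b w \<and> SQRT b w < 2 \<and> \<bar>ln (SQRT b w) - ln w / 2\<bar> \<le> 30 / 2^b"
proof (cases "w = 1")
  case True then show ?thesis by (simp add: SQRT_def)
next
  case False then show ?thesis using assms SQRT_main by simp
qed

lemma roots:
  fixes x :: real
  assumes x: "1 \<le> x" "x < 2" and b: "25 \<le> b"
  shows "1 \<le> (SQRT b ^^ i) x \<and> (SQRT b ^^ i) x < 2 \<and>
         \<bar>2^i * ln ((SQRT b ^^ i) x) - ln x\<bar> \<le> 2^(i+1) * (30 / 2^b)"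
proof (induction i)
  case 0 then show ?case using x by simp
next
  case (Suc i)
  define T where "T = (SQRT b ^^ i) x"
  have T: "1 \<le> T" "T < 2" "\<bar>2^i * ln T - ln x\<bar> \<le> 2^(i+1) * (30 / 2^b)"
    using Suc by (auto simp: T_def)
  have S: "1 \<le> SQRT b T" "SQRT b T < 2" "\<bar>ln (SQRT b T) - ln T / 2\<bar> \<le> 30 / 2^b"
    using SQRT_ok[OF T(1,2) b] by auto
  have eq: "2^(Suc i) * ln (SQRT b T) - ln x = 2^(Suc i) * (ln (SQRT b T) - ln T / 2) + (2^i * ln T - ln x)"
    by (simp add: algebra_simps)
  have "\<bar>2^(Suc i) * (ln (SQRT b T) - ln T / 2)\<bar> = 2^(Suc i) * \<bar>ln (SQRT b T) - ln T / 2\<bar>"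
    by (simp add: abs_mult)
  also have "\<dots> \<le> 2^(Suc i) * (30 / 2^b)" by (rule mult_left_mono[OF S(3)]) simp
  finally have "\<bar>2^(Suc i) * (ln (SQRT b T) - ln T / 2)\<bar> \<le> 2^(Suc i) * (30 / 2^b)" .
  moreover have "(2::real)^(i+1) * (30 / 2^b) + 2^(Suc i) * (30 / 2^b) = 2^(Suc i + 1) * (30 / 2^b)"
    by simp
  ultimately have "\<bar>2^(Suc i) * ln (SQRT b T) - ln x\<bar> \<le> 2^(Suc i + 1) * (30 / 2^b)"
    using T(3) eq by (smt (verit))
  then show ?case using S by (simp add: T_def)
qed

lemma geom_sum:
  fixes M :: int
  shows "(\<Sum>j\<in>{M - int k .. M - 1}. (2::real) powr (real_of_int j)) = 2 powr M - 2 powr (M - int k)"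
proof (induction k)
  case 0 then show ?case by simp
next
  case (Suc k)
  have p2: "(2::real) powr x = 2 * 2 powr (x - 1)" for x by (simp add: powr_diff)
  have set: "{M - int (Suc k) .. M - 1} = insert (M - int k - 1) {M - int k .. M - 1}" by auto
  have "(\<Sum>j\<in>{M - int (Suc k) .. M - 1}. (2::real) powr (real_of_int j))
      = (\<Sum>j\<in>insert (M - int k - 1) {M - int k .. M - 1}. (2::real) powr (real_of_int j))"
    by (simp only: set)
  also have "\<dots> = 2 powr (real_of_int (M - int k - 1)) + (\<Sum>j\<in>{M - int k .. M - 1}. (2::real) powr (real_of_int j))"
    by (rule sum.insert) auto
  also have "\<dots> = 2 powr (real_of_int (M - int k - 1)) + (2 powr M - 2 powr (M - int k))"
    using Suc by simp
  also have "\<dots> = 2 powr M - 2 powr (real_of_int (M - int k - 1))"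
    using p2[of "real_of_int (M - int k)"] by simp
  also have "real_of_int (M - int k - 1) = real_of_int (M - int (Suc k))" by simp
  finally show ?case .
qed

lemma fixed_repr_bound: assumes "fixed_repr n m w" shows "w < 2 ^ m"
proof -
  obtain d :: "int \<Rightarrow> real" where d: "\<forall>j. d j \<in> {0,1}"
    and w: "w = (\<Sum>j\<in>{int m - int n .. int m - 1}. d j * 2 powr (real_of_int j))"
    using assms unfolding fixed_repr_def by blast
  have "w \<le> (\<Sum>j\<in>{int m - int n .. int m - 1}. 2 powr (real_of_int j))"
    unfolding w
  proof (rule sum_mono)
    fix j show "d j * 2 powr real_of_int j \<le> 2 powr real_of_int j" using d[rule_format, of j] by auto
  qed
  also have "\<dots> = 2 powr (int m) - 2 powr (int m - int n)" by (rule geom_sum)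
  also have "\<dots> < 2 powr (int m)" by simp
  also have "2 powr (real_of_int (int m)) = 2 ^ m" by (simp add: powr_realpow)
  finally show ?thesis .
qed



lemma final_helper:
  fixes E m P A B K :: real
  assumes "E \<le> (P + 70) * A" "P \<le> m" "0 \<le> A" "A \<le> B" "m + 70 \<le> K" "0 \<le> m"
  shows "E \<le> B * K"
proof -
  have "(P + 70) * A \<le> (m + 70) * A" using assms by (intro mult_right_mono) auto
  also have "\<dots> \<le> K * B" using assms by (intro mult_mono) auto
  finally show ?thesis using assms by (simp add: mult.commute)
qed

theorem theorem3:
  fixes n m l :: nat and w r :: real
  assumes "real_of_int \<lceil>log 2 (8 * real n)\<rceil> \<le> real l"
    and "w > 1"
    and "fixed_repr n m w"
    and "\<bar>r - ln 2\<bar> \<le> 2 powr (- real (max (5 * l) 25))"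
  shows "\<bar>LN w l r - ln w\<bar>
           \<le> (3 / 4) powr (5 * real l / 2)
              * (real m + 32 / 9 + 2 * (32 / 9 + real n / ln 2) ^ 3)"
proof -
  note w1 = assms(2)
  define b where "b = max (5 * l) 25"
  define d :: real where "d = 1 / 2^b"
  have b25: "25 \<le> b" and b5: "5 * l \<le> b" by (auto simp: b_def)
  have dpos: "0 < d" by (simp add: d_def)
  have rd: "\<bar>r - ln 2\<bar> \<le> d" using assms(4) by (simp add: b_def d_def powr_minus_divide powr_realpow)
  have "(2::real)^(5*l) \<le> 2^b" using b5 by (intro power_increasing) auto
  then have "(2::real)^l * 2^(4*l) \<le> 2^b" by (simp add: power_add[symmetric])
  then have "(2::real)^l * d \<le> 1 / 2^(4*l)" by (simp add: d_def field_simps)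
  also have "(1::real) / 2^(4*l) = (1/16)^l" by (simp add: power_mult power_one_over)
  finally have ld16: "(2::real)^l * d \<le> (1/16)^l" .
  have "(1/16::real)^l \<le> (1/4)^l" by (intro power_mono) auto
  with ld16 have ld: "(2::real)^l * d \<le> (1/4)^l" by linarith
  have "d \<le> 2^l * d" using dpos by simp
  with ld have d4: "d \<le> (1/4)^l" by linarith
  have "(2::real)^(l + 20) \<le> 2^b" using b5 b25 by (intro power_increasing) auto
  then have ld20: "(2::real)^l * d \<le> 1 / 2^20" by (simp add: d_def power_add field_simps)
  obtain k where k: "w < 2^k" using real_arch_pow[of 2 w] by auto
  define p where "p = (LEAST k::nat. w < 2^k)"
  have p1: "w < 2^p" unfolding p_def by (rule LeastI[of _ k]) (rule k)
  have p0: "p \<noteq> 0"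
  proof
    assume "p = 0" then show False using p1 w1 by simp
  qed
  have p2: "2^(p-1) \<le> w"
  proof -
    have "\<not> w < 2^(p-1)" unfolding p_def by (rule not_less_Least) (use p0 in \<open>simp add: p_def\<close>)
    then show ?thesis by simp
  qed
  have hp: "(THE p::nat. 2 ^ p > w \<and> w \<ge> 2 ^ (p - 1)) = p"
  proof (rule the_equality)
    show "2 ^ p > w \<and> w \<ge> 2 ^ (p - 1)" using p1 p2 by simp
  next
    fix q :: nat assume q: "2 ^ q > w \<and> w \<ge> 2 ^ (q - 1)"
    have q0: "q \<noteq> 0"
    proof
      assume "q = 0" then show False using q w1 by simp
    qed
    have "(2::real)^(p-1) < 2^q" using p2 q by linarith
    then have a1: "p - 1 < q" by (simp add: power_strict_increasing_iff)
    have "(2::real)^(q-1) < 2^p" using p1 q by linarith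
    then have a2: "q - 1 < p" by (simp add: power_strict_increasing_iff)
    from a1 a2 show "q = p" using p0 q0 by linarith
  qed
  have pm: "real p - 1 \<le> real m"
  proof -
    have "(2::real)^(p-1) < 2^m" using p2 fixed_repr_bound[OF assms(3)] by linarith
    then have "p - 1 < m" by (simp add: power_strict_increasing_iff)
    then show ?thesis using p0 by linarith
  qed
  define wp where "wp = 2 powr (1 - real p) * w"
  have pp: "2 powr (real p - 1) = 2^(p-1)" using p0 by (simp add: powr_realpow[symmetric] of_nat_diff)
  have wpeq: "w = 2 powr (real p - 1) * wp"
    by (simp add: wp_def powr_add[symmetric])
  have P: "0 < (2::real)^(p-1)" by simp
  have "(2::real)^(p-1) * 1 \<le> 2^(p-1) * wp" using p2 wpeq pp by simp
  then have wp1: "1 \<le> wp" using mult_le_cancel_left_pos[OF P] by blast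
  have "(2::real)^(p-1) * 2 = 2^p" by (rule power_minus_mult) (use p0 in simp)
  then have "(2::real)^(p-1) * wp < 2^(p-1) * 2" using p1 wpeq pp by simp
  then have wp2: "wp < 2" using mult_less_cancel_left_pos[OF P] by blast
  have lnw: "ln w = (real p - 1) * ln 2 + ln wp"
    using wp1 by (simp add: wpeq ln_mult ln_powr)
  define t where "t = PowerOf2Roots b wp l"
  have LNeq: "LN w l r = (if wp = 1 then 0 else 2^l * trunc_bits b ((t - 1) - (t - 1)\<^sup>2 / 2)) + (real p - 1) * r"
    unfolding LN_def Let_def hp using w1 by (simp add: wp_def t_def b_def)
  have Ebound: "\<bar>LN w l r - ln w\<bar> \<le> (real p - 1 + 70) * (1/4)^l"
  proof (cases "wp = 1")
    case True
    have e1: "LN w l r - ln w = (real p - 1) * (r - ln 2)"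
      using LNeq lnw True by (simp add: algebra_simps)
    have pn: "0 \<le> real p - 1" using p0 by simp
    have "\<bar>LN w l r - ln w\<bar> = (real p - 1) * \<bar>r - ln 2\<bar>"
      unfolding e1 abs_mult using pn by simp
    also have "\<dots> \<le> (real p - 1) * d" using rd p0 by (intro mult_left_mono) auto
    also have "\<dots> \<le> (real p - 1) * (1/4)^l" using d4 p0 by (intro mult_left_mono) auto
    also have "\<dots> \<le> (real p - 1 + 70) * (1/4)^l" by (intro mult_right_mono) auto
    finally show ?thesis .
  next
    case False
    have R: "1 \<le> t" "t < 2" "\<bar>2^l * ln t - ln wp\<bar> \<le> 2^(l+1) * (30 / 2^b)"
      using roots[OF wp1 wp2 b25, of l] by (auto simp: t_def PowerOf2Roots_def)
    define u where "u = t - 1"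
    define y where "y = u - u^2/2"
    have u0: "0 \<le> u" using R by (simp add: u_def)
    have lnt: "ln t = ln (1 + u)" by (simp add: u_def)
    have yl: "y \<le> ln t" "ln t \<le> y + u^3/3" using ln_series_lower[OF u0] ln_series_upper[OF u0] lnt
      by (auto simp: y_def)
    have ty: "y - d < trunc_bits b y" "trunc_bits b y \<le> y" using trunc_gt[of y b] trunc_le[of b y] by (auto simp: d_def)
    have R3: "\<bar>2^l * ln t - ln wp\<bar> \<le> 60 * (2^l * d)"
      using R(3) by (simp add: d_def)
    have LN2: "LN w l r - ln w = 2^l * (trunc_bits b y - y) + 2^l * (y - ln t) + (2^l * ln t - ln wp) + (real p - 1) * (r - ln 2)"
      using LNeq False lnw by (simp add: y_def u_def algebra_simps)
    have "ln (1/t) \<le> 1/t - 1" using R by (intro ln_le_minus_one) auto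
    then have "1 - 1/t \<le> ln t" using R by (simp add: ln_div)
    then have "u / t \<le> ln t" using R by (simp add: u_def field_simps)
    then have "u \<le> t * ln t" using R by (simp add: divide_le_eq mult.commute)
    moreover have "t * ln t \<le> 2 * ln t" using R by (intro mult_right_mono) auto
    ultimately have u2: "u \<le> 2 * ln t" by linarith
    have "ln wp < ln 2" using wp1 wp2 by simp
    then have lwp: "ln wp < 1" using ln_2_less_1 by linarith
    have "2^l * ln t - ln wp \<le> 60 * (2^l * d)" using R3 by (rule abs_le_D1)
    moreover have "(1::real) / 2^20 \<le> 1/1000" by simp
    ultimately have lt: "2^l * ln t \<le> 3/2" using lwp ld20 by linarith
    have "2^l * u \<le> 2^l * (2 * ln t)" by (rule mult_left_mono[OF u2]) simp
    then have ul: "2^l * u \<le> 3" using lt by linarith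
    have h4: "(4::real)^l = 2^(2*l)" by (simp add: power_mult)
    have h5: "(2::real)^l * 4^l = 2^(l*3)" unfolding h4 power_add[symmetric] by (simp add: mult.commute)
    have "2^l * (u^3/3) = (2^l * u)^3 / (3 * 4^l)"
      using h5 by (simp add: power_mult_distrib power_mult[symmetric] field_simps)
    also have "\<dots> \<le> 3^3 / (3 * 4^l)" using ul u0 by (intro divide_right_mono power_mono) auto
    also have "\<dots> = 9 * (1/4)^l" by (simp add: power_one_over)
    finally have cub: "2^l * (u^3/3) \<le> 9 * (1/4)^l" .
    have t1: "\<bar>2^l * (trunc_bits b y - y)\<bar> \<le> 2^l * d" using ty by (simp add: abs_mult)
    have t2: "\<bar>2^l * (y - ln t)\<bar> \<le> 2^l * (u^3/3)" using yl by (simp add: abs_mult)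
    have t4: "\<bar>(real p - 1) * (r - ln 2)\<bar> \<le> (real p - 1) * (1/4)^l"
    proof -
      have pn: "0 \<le> real p - 1" using p0 by simp
      have "\<bar>(real p - 1) * (r - ln 2)\<bar> = (real p - 1) * \<bar>r - ln 2\<bar>" unfolding abs_mult using pn by simp
      also have "\<dots> \<le> (real p - 1) * (1/4)^l" using rd d4 p0 by (intro mult_left_mono) auto
      finally show ?thesis .
    qed
    have "\<bar>LN w l r - ln w\<bar> \<le> 2^l * d + 9 * (1/4)^l + 60 * (2^l * d) + (real p - 1) * (1/4)^l"
      unfolding LN2 using t1 t2 t4 R3 cub by linarith
    then show ?thesis using ld by (simp add: algebra_simps)
  qed
  have "(3/4::real) powr (real (3 * l)) \<le> (3/4) powr (5 * real l / 2)"
    by (intro powr_mono') auto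
  moreover have "(3/4::real) powr (real (3 * l)) = (27/64)^l"
  proof -
    have "(3/4::real) powr (real (3 * l)) = (3/4)^(3*l)" by (rule powr_realpow) simp
    also have "\<dots> = ((3/4)^3)^l" by (simp add: power_mult)
    also have "(3/4::real)^3 = 27/64" by (simp add: power3_eq_cube)
    finally show ?thesis .
  qed
  moreover have "(1/4::real)^l \<le> (27/64)^l" by (intro power_mono) auto
  ultimately have A: "(1/4::real)^l \<le> (3/4) powr (5 * real l / 2)" by linarith
  have "(32/9::real)^3 \<le> (32/9 + real n / ln 2)^3" by (intro power_mono) auto
  moreover have "(32/9::real)^3 = 32768/729" by (simp add: power3_eq_cube)
  ultimately have K: "real m + 70 \<le> real m + 32 / 9 + 2 * (32 / 9 + real n / ln 2) ^ 3" by linarith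
  show ?thesis by (rule final_helper[OF Ebound pm _ A K]) auto
qed

end
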